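(* A forward complete system $\dot x(t)=f(x_t,u(t))$, $y(t)=h(x_t)$ as in the context is OL-IOS if and only if there exist $\beta\in\mathcal{KL}$ and $\rho,\gamma\in\mathcal N$ such that $|y(t,\xi,u)|\le\beta\big(|h(\xi)|,\ \tfrac{t}{1+\rho(\|\xi\|_{\mathcal X})}\big)+\gamma(\|u\|)$ for all $t\ge0$, all $\xi\in\mathcal X^n$ and all $u\in\mathcal M$.
   Context: Fix $\theta>0$; $\mathcal X^k=C([-\theta,0],\mathbb R^k)$ with norm $\|\xi\|_{\mathcal X}=\max_{s\in[-\theta,0]}|\xi(s)|$; $x_t(s)=x(t+s)$. $\mathcal M$: measurable locally essentially bounded $u:\mathbb R_{\ge0}\to\mathbb R^m$, $\|u\|$ the essential supremum on $[0,\infty)$. Classes: $\mathcal N$ = continuous nondecreasing $\sigma:\mathbb R_{\ge0}\to\mathbb R_{\ge0}$, $\sigma(0)=0$; $\mathcal K$ = strictly increasing ones; $\mathcal{KL}$ = $\beta(s,t)$ of class $\mathcal K$ in $s$ and decreasing to $0$ as $t\to\infty$. System: $f:\mathcal X^n\times\mathbb R^m\to\mathbb R^n$ locally Lipschitz, mapping bounded sets to bounded sets; $h:\mathcal X^n\to\mathbb R^p$ continuous with $|h(\xi)|\le\pi(\|\xi\|_{\mathcal X})$ for some $\pi\in\mathcal N$; $x(\cdot,\xi,u)$ unique maximal solution with initial history $\xi$, $y(t,\xi,u)=h(x_t^{\xi,u})$. Forward complete: all solutions exist for all $t\ge0$. IOS: forward complete and there exist $\beta\in\mathcal{KL},\gamma\in\mathcal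 N$ with $|y(t,\xi,u)|\le\beta(\|\xi\|_{\mathcal X},t)+\gamma(\|u\|)$ for all $t\ge0,\xi,u$. OL-IOS: IOS and additionally there is $\sigma\in\mathcal N$ with $|y(t,\xi,u)|\le\max\{\sigma(|h(\xi)|),\sigma(\|u\|)\}$ for all $t\ge0,\xi,u$. *)

theory Defs
  imports "HOL-Analysis.Analysis"
begin

definition classN :: "(real \<Rightarrow> real) \<Rightarrow> bool" where
  "classN \<sigma> \<longleftrightarrow> continuous_on {0..} \<sigma> \<and> mono_on {0..} \<sigma> \<and> \<sigma> 0 = 0 \<and> (\<forall>s\<ge>0. \<sigma> s \<ge> 0)"

definition classK :: "(real \<Rightarrow> real) \<Rightarrow> bool" where
  "classK \<sigma> \<longleftrightarrow> classN \<sigma> \<and> strict_mono_on {0..} \<sigma>"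

definition classKL :: "(real \<Rightarrow> real \<Rightarrow> real) \<Rightarrow> bool" where
  "classKL \<beta> \<longleftrightarrow> continuous_on ({0..} \<times> {0..}) (\<lambda>(s,t). \<beta> s t)
     \<and> (\<forall>t\<ge>0. classK (\<lambda>s. \<beta> s t))
     \<and> (\<forall>s\<ge>0. antimono_on {0..} (\<beta> s) \<and> ((\<beta> s) \<longlongrightarrow> 0) at_top)"

section \<open>State space C([-theta,0], R^n), histories extended by 0 outside [-theta,0]\<close>

definition Xspace :: "real \<Rightarrow> (real \<Rightarrow> 'a::euclidean_space) set" where
  "Xspace \<theta> = {\<xi>. continuous_on {-\<theta>..0} \<xi> \<and> (\<forall>s. s \<notin> {-\<theta>..0} \<longrightarrow> \<xi> s = 0)}"

definition xnorm :: "real \<Rightarrow> (real \<Rightarrow> 'a::euclidean_space) \<Rightarrow> real" where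
  "xnorm \<theta> \<xi> = (SUP s\<in>{-\<theta>..0}. norm (\<xi> s))"

definition seg :: "real \<Rightarrow> (real \<Rightarrow> 'a::euclidean_space) \<Rightarrow> real \<Rightarrow> (real \<Rightarrow> 'a)" where
  "seg \<theta> x t = (\<lambda>s. if -\<theta> \<le> s \<and> s \<le> 0 then x (t + s) else 0)"

definition Mspace :: "(real \<Rightarrow> 'b::euclidean_space) set" where
  "Mspace = {u. u \<in> borel_measurable (restrict_space lebesgue {0..})
      \<and> (\<forall>T. \<exists>B. AE t in lebesgue. 0 \<le> t \<and> t \<le> T \<longrightarrow> norm (u t) \<le> B)}"

definition ess_bounded :: "(real \<Rightarrow> 'b::euclidean_space) \<Rightarrow> bool" where
  "ess_bounded u \<longleftrightarrow> (\<exists>B. AE t in lebesgue. 0 \<le> t \<longrightarrow> norm (u t) \<le> B)"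

text \<open>Essential supremum of |u| on [0,infinity) (meaningful for essentially bounded u).\<close>
definition unorm :: "(real \<Rightarrow> 'b::euclidean_space) \<Rightarrow> real" where
  "unorm u = Inf {B. B \<ge> 0 \<and> (AE t in lebesgue. 0 \<le> t \<longrightarrow> norm (u t) \<le> B)}"

definition f_locally_lipschitz ::
  "real \<Rightarrow> ((real \<Rightarrow> 'a::euclidean_space) \<Rightarrow> 'b::euclidean_space \<Rightarrow> 'a) \<Rightarrow> bool" where
  "f_locally_lipschitz \<theta> f \<longleftrightarrow>
    (\<forall>\<xi>\<in>Xspace \<theta>. \<forall>v. \<exists>r>0. \<exists>L. \<forall>\<xi>1\<in>Xspace \<theta>. \<forall>\<xi>2\<in>Xspace \<theta>. \<forall>v1 v2.
       xnorm \<theta> (\<lambda>s. \<xi>1 s - \<xi> s) < r \<longrightarrow> xnorm \<theta> (\<lambda>s. \<xi>2 s - \<xi> s) < r \<longrightarrow>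
       norm (v1 - v) < r \<longrightarrow> norm (v2 - v) < r \<longrightarrow>
       norm (f \<xi>1 v1 - f \<xi>2 v2) \<le> L * (xnorm \<theta> (\<lambda>s. \<xi>1 s - \<xi>2 s) + norm (v1 - v2)))"

definition f_bounded_on_bounded ::
  "real \<Rightarrow> ((real \<Rightarrow> 'a::euclidean_space) \<Rightarrow> 'b::euclidean_space \<Rightarrow> 'a) \<Rightarrow> bool" where
  "f_bounded_on_bounded \<theta> f \<longleftrightarrow>
    (\<forall>R. \<exists>B. \<forall>\<xi>\<in>Xspace \<theta>. \<forall>v. xnorm \<theta> \<xi> \<le> R \<longrightarrow> norm v \<le> R \<longrightarrow> norm (f \<xi> v) \<le> B)"

definition h_continuous ::
  "real \<Rightarrow> ((real \<Rightarrow> 'a::euclidean_space) \<Rightarrow> 'c::euclidean_space) \<Rightarrow> bool" where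
  "h_continuous \<theta> h \<longleftrightarrow>
    (\<forall>\<xi>\<in>Xspace \<theta>. \<forall>\<epsilon>>0. \<exists>\<delta>>0. \<forall>\<xi>'\<in>Xspace \<theta>.
       xnorm \<theta> (\<lambda>s. \<xi>' s - \<xi> s) < \<delta> \<longrightarrow> norm (h \<xi>' - h \<xi>) < \<epsilon>)"

text \<open>x is a solution on [-theta, infinity) with initial history xi and input u
  (Caratheodory sense, integral form).\<close>
definition is_solution ::
  "real \<Rightarrow> ((real \<Rightarrow> 'a::euclidean_space) \<Rightarrow> 'b::euclidean_space \<Rightarrow> 'a) \<Rightarrow>
   (real \<Rightarrow> 'a) \<Rightarrow> (real \<Rightarrow> 'b) \<Rightarrow> (real \<Rightarrow> 'a) \<Rightarrow> bool" where
  "is_solution \<theta> f \<xi> u x \<longleftrightarrow>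
     (\<forall>s\<in>{-\<theta>..0}. x s = \<xi> s) \<and> continuous_on {-\<theta>..} x \<and>
     (\<forall>t\<ge>0. ((\<lambda>s. f (seg \<theta> x s) (u s)) has_integral (x t - x 0)) {0..t})"

definition forward_complete ::
  "real \<Rightarrow> ((real \<Rightarrow> 'a::euclidean_space) \<Rightarrow> 'b::euclidean_space \<Rightarrow> 'a) \<Rightarrow> bool" where
  "forward_complete \<theta> f \<longleftrightarrow>
     (\<forall>\<xi>\<in>Xspace \<theta>. \<forall>u\<in>Mspace. \<exists>x. is_solution \<theta> f \<xi> u x)"

definition IOS ::
  "real \<Rightarrow> ((real \<Rightarrow> 'a::euclidean_space) \<Rightarrow> 'b::euclidean_space \<Rightarrow> 'a) \<Rightarrow>
   ((real \<Rightarrow> 'a) \<Rightarrow> 'c::euclidean_space) \<Rightarrow> bool" where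
  "IOS \<theta> f h \<longleftrightarrow> forward_complete \<theta> f \<and>
     (\<exists>\<beta> \<gamma>. classKL \<beta> \<and> classN \<gamma> \<and>
        (\<forall>\<xi>\<in>Xspace \<theta>. \<forall>u\<in>Mspace. ess_bounded u \<longrightarrow> (\<forall>x. is_solution \<theta> f \<xi> u x \<longrightarrow>
          (\<forall>t\<ge>0. norm (h (seg \<theta> x t)) \<le> \<beta> (xnorm \<theta> \<xi>) t + \<gamma> (unorm u)))))"

definition OL_IOS ::
  "real \<Rightarrow> ((real \<Rightarrow> 'a::euclidean_space) \<Rightarrow> 'b::euclidean_space \<Rightarrow> 'a) \<Rightarrow>
   ((real \<Rightarrow> 'a) \<Rightarrow> 'c::euclidean_space) \<Rightarrow> bool" where
  "OL_IOS \<theta> f h \<longleftrightarrow> IOS \<theta> f h \<and>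
     (\<exists>\<sigma>. classN \<sigma> \<and>
        (\<forall>\<xi>\<in>Xspace \<theta>. \<forall>u\<in>Mspace. ess_bounded u \<longrightarrow> (\<forall>x. is_solution \<theta> f \<xi> u x \<longrightarrow>
          (\<forall>t\<ge>0. norm (h (seg \<theta> x t)) \<le> max (\<sigma> (norm (h \<xi>))) (\<sigma> (unorm u))))))"

end

theory Submission
  imports Defs
begin


lemma KL_lim: "classKL \<beta> \<Longrightarrow> s \<ge> 0 \<Longrightarrow> (\<beta> s \<longlongrightarrow> 0) at_top"
  unfolding classKL_def by simp
lemma KL_mono: assumes "classKL \<beta>" "t \<ge> 0" "0 \<le> s1" "s1 \<le> s2" shows "\<beta> s1 t \<le> \<beta> s2 t"
proof -
  have "classK (\<lambda>s. \<beta> s t)" using assms(1,2) unfolding classKL_def by simp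
  then have "mono_on {0..} (\<lambda>s. \<beta> s t)" unfolding classK_def classN_def by simp
  then show ?thesis by (rule mono_onD) (use assms in auto)
qed
lemma KL_anti: assumes "classKL \<beta>" "s \<ge> 0" "0 \<le> t1" "t1 \<le> t2" shows "\<beta> s t2 \<le> \<beta> s t1"
proof -
  have "antimono_on {0..} (\<beta> s)" using assms(1,2) unfolding classKL_def by simp
  then show ?thesis by (rule monotone_onD) (use assms in auto)
qed
lemma KL_nonneg: assumes "classKL \<beta>" "s \<ge> 0" "t \<ge> 0" shows "\<beta> s t \<ge> 0"
proof -
  have "classK (\<lambda>s. \<beta> s t)" using assms(1,3) unfolding classKL_def by simp
  then show ?thesis unfolding classK_def classN_def using assms(2) by simp
qed
lemma KL_zero: assumes "classKL \<beta>" "t \<ge> 0" shows "\<beta> 0 t = 0"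
proof -
  have "classK (\<lambda>s. \<beta> s t)" using assms unfolding classKL_def by simp
  then show ?thesis unfolding classK_def classN_def by simp
qed
lemma KL_cont: "classKL \<beta> \<Longrightarrow> continuous_on ({0..} \<times> {0..}) (\<lambda>(s,t). \<beta> s t)"
  unfolding classKL_def by simp
lemma N_mono: assumes "classN f" "0 \<le> a" "a \<le> b" shows "f a \<le> f b"
proof -
  have "mono_on {0..} f" using assms(1) unfolding classN_def by simp
  then show ?thesis by (rule mono_onD) (use assms in auto)
qed
lemma N_nonneg: "classN f \<Longrightarrow> 0 \<le> a \<Longrightarrow> f a \<ge> 0"
  unfolding classN_def by simp
lemma N_zero: "classN f \<Longrightarrow> f 0 = 0"
  unfolding classN_def by simp
lemma N_cont: "classN f \<Longrightarrow> continuous_on {0..} f"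
  unfolding classN_def by simp

lemma cont_on_halfline:
  fixes F :: "real \<Rightarrow> real"
  assumes "\<And>b. b \<ge> 0 \<Longrightarrow> continuous_on {0..b} F"
  shows "continuous_on {0..} F"
proof (clarsimp simp: continuous_on_eq_continuous_within)
  fix x :: real assume x: "0 \<le> x"
  have c: "continuous (at x within {0..x+1}) F"
    using assms[of "x+1"] x by (simp add: continuous_on_eq_continuous_within)
  have "at x within {0..} = at x within {0..x+1}"
    by (rule at_within_nhd[of _ "{..<x+1}"]) auto
  then show "continuous (at x within {0..}) F" using c by simp
qed

lemma indef_int_props:
  fixes n :: "real \<Rightarrow> real"
  assumes mono: "mono n" and nn: "\<And>x. n x \<ge> 0"
    and F_def: "F = (\<lambda>\<tau>. integral {0..\<tau>} n)"
  shows "continuous_on {0..} F"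
    and "\<And>a b. 0 \<le> a \<Longrightarrow> a \<le> b \<Longrightarrow> F b = F a + integral {a..b} n"
    and "\<And>a b. a \<le> b \<Longrightarrow> (b - a) * n a \<le> integral {a..b} n"
    and "\<And>a b. a \<le> b \<Longrightarrow> integral {a..b} n \<le> (b - a) * n b"
    and "\<And>a. F a \<ge> 0"
    and "F 0 = 0"
proof -
  have int: "n integrable_on {a..b}" for a b
    by (rule integrable_on_mono_on) (meson mono mono_on_subset subset_UNIV)
  show "continuous_on {0..} F" unfolding F_def
    by (rule cont_on_halfline, rule indefinite_integral_continuous_1, rule int)
  show "F b = F a + integral {a..b} n" if "0 \<le> a" "a \<le> b" for a b
    unfolding F_def using Henstock_Kurzweil_Integration.integral_combine[OF _ _ int, of 0 a b] that by simp
  show "(b - a) * n a \<le> integral {a..b} n" if "a \<le> b" for a b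
  proof -
    have "integral {a..b} (\<lambda>_. n a) \<le> integral {a..b} n"
      by (rule integral_le) (auto intro: int monoD[OF mono])
    then show ?thesis using that by simp
  qed
  show "integral {a..b} n \<le> (b - a) * n b" if "a \<le> b" for a b
  proof -
    have "integral {a..b} n \<le> integral {a..b} (\<lambda>_. n b)"
      by (rule integral_le) (auto intro: int monoD[OF mono])
    then show ?thesis using that by simp
  qed
  show "F a \<ge> 0" for a unfolding F_def by (rule integral_nonneg) (auto intro: int nn)
  show "F 0 = 0" unfolding F_def by simp
qed

lemma majorant:
  fixes m :: "real \<Rightarrow> real"
  assumes mono: "mono m" and nn: "\<And>x. m x \<ge> 0"
  shows "\<exists>\<rho> C. classN \<rho> \<and> C \<ge> 1 \<and> (\<forall>s\<ge>0. m s \<le> C * (1 + \<rho> s))"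
proof -
  define n where "n = (\<lambda>x. m (x + 1))"
  have mn: "mono n" unfolding n_def using mono by (auto simp: mono_def)
  have nnn: "\<And>x. n x \<ge> 0" unfolding n_def using nn by simp
  define \<rho> where "\<rho> = (\<lambda>\<tau>. integral {0..\<tau>} n)"
  note P = indef_int_props[OF mn nnn \<rho>_def]
  have "classN \<rho>"
    unfolding classN_def
  proof (intro conjI allI impI)
    show "continuous_on {0..} \<rho>" by (rule P(1))
    show "mono_on {0..} \<rho>"
    proof (rule mono_onI)
      fix a b :: real assume "a \<in> {0..}" "b \<in> {0..}" "a \<le> b"
      moreover have "0 \<le> (b-a) * n a" using \<open>a \<le> b\<close> nnn[of a] by simp
      moreover have "a \<ge> 0" using \<open>a \<in> {0..}\<close> by simp
      moreover note P(2)[of a b] P(3)[of a b] \<open>a \<le> b\<close>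
      ultimately show "\<rho> a \<le> \<rho> b" by linarith
    qed
  qed (use P(5) P(6) in auto)
  moreover have "\<forall>s\<ge>0. m s \<le> max 1 (m 1) * (1 + \<rho> s)"
  proof (intro allI impI)
    fix s :: real assume s: "s \<ge> 0"
    have r0: "\<rho> s \<ge> 0" using P(5) by simp
    show "m s \<le> max 1 (m 1) * (1 + \<rho> s)"
    proof (cases "s \<ge> 1")
      case True
      have "\<rho> s = \<rho> (s - 1) + integral {s-1..s} n" using P(2)[of "s-1" s] True by simp
      moreover have "integral {s-1..s} n \<ge> m s" using P(3)[of "s-1" s] by (simp add: n_def)
      moreover have "\<rho> (s-1) \<ge> 0" using P(5) by simp
      ultimately have "m s \<le> \<rho> s" by linarith
      also have "\<rho> s \<le> 1 * (1 + \<rho> s)" by simp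
      also have "\<dots> \<le> max 1 (m 1) * (1 + \<rho> s)" using r0 by (intro mult_right_mono) auto
      finally show ?thesis .
    next
      case False
      then have "m s \<le> m 1" using monoD[OF mono, of s 1] by simp
      also have "m 1 \<le> max 1 (m 1) * 1" by simp
      also have "\<dots> \<le> max 1 (m 1) * (1 + \<rho> s)" using r0
        by (intro mult_left_mono) auto
      finally show ?thesis .
    qed
  qed
  ultimately show ?thesis by (intro exI[of _ \<rho>] exI[of _ "max 1 (m 1)"]) auto
qed

lemma minorant:
  fixes n :: "real \<Rightarrow> real"
  assumes mono: "mono n" and nn: "\<And>x. n x \<ge> 0" and lim: "filterlim n at_top at_top"
  shows "\<exists>D. continuous_on {0..} D \<and> mono_on {0..} D \<and> (\<forall>\<tau>\<ge>0. 0 \<le> D \<tau> \<and> D \<tau> \<le> n \<tau>)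
           \<and> filterlim D at_top at_top"
proof -
  define F where "F = (\<lambda>\<tau>. integral {0..\<tau>} n)"
  note P = indef_int_props[OF mono nn F_def]
  define D where "D = (\<lambda>\<tau>. F \<tau> / (\<tau> + 1))"
  have Fle: "F \<tau> \<le> \<tau> * n \<tau>" if "\<tau> \<ge> 0" for \<tau>
    using P(2)[of 0 \<tau>] P(4)[of 0 \<tau>] P(6) that by simp
  have "continuous_on {0..} D" unfolding D_def
    by (intro continuous_intros P(1)) auto
  moreover have "mono_on {0..} D"
  proof (rule mono_onI)
    fix a b :: real assume ab: "a \<in> {0..}" "b \<in> {0..}" "a \<le> b"
    have "F b \<ge> F a + (b - a) * n a" using P(2)[of a b] P(3)[of a b] ab by simp
    moreover have "F a \<le> (a + 1) * n a" using Fle[of a] ab nn[of a] by (simp add: algebra_simps)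
    ultimately have "F b * (a + 1) \<ge> F a * (b + 1)"
    proof -
      assume h1: "F b \<ge> F a + (b - a) * n a" and h2: "F a \<le> (a + 1) * n a"
      have "F b * (a + 1) \<ge> (F a + (b - a) * n a) * (a + 1)"
        using h1 ab by (intro mult_right_mono) auto
      moreover have "(b - a) * ((a + 1) * n a) \<ge> (b - a) * F a"
        using h2 ab by (intro mult_left_mono) auto
      ultimately show ?thesis by (simp add: algebra_simps)
    qed
    then show "D a \<le> D b" unfolding D_def using ab
      by (simp add: divide_simps mult.commute)
  qed
  moreover have "\<forall>\<tau>\<ge>0. 0 \<le> D \<tau> \<and> D \<tau> \<le> n \<tau>"
  proof (intro allI impI conjI)
    fix \<tau> :: real assume t: "\<tau> \<ge> 0"
    show "0 \<le> D \<tau>" unfolding D_def using P(5)[of \<tau>] t by simp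
    have "F \<tau> \<le> (\<tau> + 1) * n \<tau>" using Fle[OF t] nn[of \<tau>] by (simp add: algebra_simps)
    then show "D \<tau> \<le> n \<tau>" unfolding D_def using t by (simp add: divide_simps mult.commute)
  qed
  moreover have "filterlim D at_top at_top"
    unfolding filterlim_at_top
  proof
    fix Z :: real
    from lim have "eventually (\<lambda>x. n x \<ge> 4 * Z) at_top" by (simp add: filterlim_at_top)
    then obtain N where N: "\<And>x. x \<ge> N \<Longrightarrow> n x \<ge> 4 * Z" by (auto simp: eventually_at_top_linorder)
    show "eventually (\<lambda>\<tau>. D \<tau> \<ge> Z) at_top"
      unfolding eventually_at_top_linorder
    proof (intro exI[of _ "max 1 (2 * max N 0)"] allI impI)
      fix \<tau> :: real assume t: "\<tau> \<ge> max 1 (2 * max N 0)"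
      have "F \<tau> = F (\<tau>/2) + integral {\<tau>/2..\<tau>} n" using P(2)[of "\<tau>/2" \<tau>] t by simp
      moreover have "integral {\<tau>/2..\<tau>} n \<ge> (\<tau>/2) * n (\<tau>/2)" using P(3)[of "\<tau>/2" \<tau>] t by simp
      ultimately have Fg: "F \<tau> \<ge> (\<tau>/2) * n (\<tau>/2)" using P(5)[of "\<tau>/2"] by linarith
      have "N \<le> \<tau>/2" using t by linarith
      then have nZ: "n (\<tau>/2) \<ge> 4 * Z" using N by blast
      show "D \<tau> \<ge> Z"
      proof (cases "Z \<le> 0")
        case True
        have "0 \<le> F \<tau> / (\<tau> + 1)" using P(5)[of \<tau>] t by simp
        then show ?thesis using True unfolding D_def by linarith
      next
        case False
        have "(\<tau>/2) * n (\<tau>/2) \<ge> (\<tau>/2) * (4 * Z)" using nZ t by (intro mult_left_mono) auto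
        then have "F \<tau> \<ge> 2 * \<tau> * Z" using Fg by linarith
        moreover have "2 * \<tau> * Z \<ge> (\<tau> + 1) * Z" using t False by (simp add: algebra_simps)
        ultimately have "Z * (\<tau> + 1) \<le> F \<tau>" by (simp add: algebra_simps)
        then show ?thesis unfolding D_def using t by (simp add: divide_simps)
      qed
    qed
  qed
  ultimately show ?thesis by blast
qed


lemma min_le_harm:
  fixes a b d :: real
  assumes "a \<ge> 0" "d \<ge> 0" "d * b \<le> 1"
  shows "min b a \<le> 2 * a / (1 + a * d)"
proof (cases "a * d \<le> 1")
  case True
  have "a * (a * d) \<le> a * 1" using True assms by (intro mult_left_mono) auto
  then have "a * (1 + a * d) \<le> 2 * a" by (simp add: algebra_simps)
  moreover have "0 < 1 + a * d" using assms by (simp add: add_pos_nonneg)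
  ultimately have "a \<le> 2 * a / (1 + a * d)" by (simp add: pos_le_divide_eq mult.commute)
  then show ?thesis by simp
next
  case False
  then have dpos: "d > 0" using assms by (cases "d = 0") auto
  have "b \<le> 1 / d" using assms dpos by (simp add: divide_simps mult.commute)
  also have "1 / d \<le> 2 * a / (1 + a * d)"
    using False dpos assms by (simp add: divide_simps algebra_simps)
  finally show ?thesis by simp
qed

lemma KL_harm:
  fixes \<sigma> D :: "real \<Rightarrow> real"
  assumes sN: "classN \<sigma>" and Dc: "continuous_on {0..} D" and Dm: "mono_on {0..} D"
    and Dn: "\<forall>\<tau>\<ge>0. D \<tau> \<ge> 0" and Dl: "filterlim D at_top at_top"
  shows "classKL (\<lambda>r \<tau>. 2 * (\<sigma> r + r) / (1 + (\<sigma> r + r) * D \<tau>))"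
proof -
  define a where "a = (\<lambda>r. \<sigma> r + r)"
  have ac: "continuous_on {0..} a" using sN unfolding classN_def a_def by (auto intro!: continuous_intros)
  have an: "a r \<ge> 0" if "r \<ge> 0" for r using sN that unfolding classN_def a_def by auto
  have a0: "a 0 = 0" using sN unfolding classN_def a_def by auto
  have sm: "mono_on {0..} \<sigma>" using sN unfolding classN_def by blast
  have asm: "a r1 < a r2" if "0 \<le> r1" "r1 < r2" for r1 r2
  proof -
    have "\<sigma> r1 \<le> \<sigma> r2" by (rule mono_onD[OF sm]) (use that in auto)
    then show ?thesis unfolding a_def using that by linarith
  qed
  have fmono: "2 * x1 / (1 + x1 * d) < 2 * x2 / (1 + x2 * d)" if "0 \<le> x1" "x1 < x2" "d \<ge> 0" for x1 x2 d :: real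
  proof -
    have "0 < 1 + x1 * d" "0 < 1 + x2 * d" using that by (auto intro: add_pos_nonneg mult_nonneg_nonneg)
    moreover have "2 * x1 * (1 + x2 * d) < 2 * x2 * (1 + x1 * d)" using that by (simp add: algebra_simps)
    ultimately show ?thesis by (simp add: divide_simps)
  qed
  have "classKL (\<lambda>r \<tau>. 2 * a r / (1 + a r * D \<tau>))"
    unfolding classKL_def classK_def classN_def
  proof (intro conjI allI impI)
    have c1: "continuous_on ({0..} \<times> {0..}) (\<lambda>x. a (fst x))"
      by (rule continuous_on_compose2[OF ac continuous_on_fst[OF continuous_on_id]]) auto
    have c2: "continuous_on ({0..} \<times> {0..}) (\<lambda>x. D (snd x))"
      by (rule continuous_on_compose2[OF Dc continuous_on_snd[OF continuous_on_id]]) auto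
    have nz: "\<forall>x\<in>{0..} \<times> {0..}. 1 + a (fst x) * D (snd x) \<noteq> 0"
    proof
      fix x :: "real \<times> real" assume "x \<in> {0..} \<times> {0..}"
      then have "a (fst x) \<ge> 0" "D (snd x) \<ge> 0" using an Dn by (auto simp: mem_Times_iff)
      then show "1 + a (fst x) * D (snd x) \<noteq> 0" by (smt (verit) mult_nonneg_nonneg)
    qed
    have "continuous_on ({0..} \<times> {0..}) (\<lambda>x. 2 * a (fst x) / (1 + a (fst x) * D (snd x)))"
      by (intro continuous_on_divide continuous_on_mult continuous_on_add continuous_on_const c1 c2 nz)
    then show "continuous_on ({0..} \<times> {0..}) (\<lambda>(r, \<tau>). 2 * a r / (1 + a r * D \<tau>))"
      by (simp add: case_prod_beta')
  next
    fix t :: real assume t: "0 \<le> t"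
    have nz: "\<forall>x\<in>{0..}. 1 + a x * D t \<noteq> 0"
    proof
      fix x :: real assume "x \<in> {0..}"
      then have "a x \<ge> 0" "D t \<ge> 0" using an Dn t by auto
      then show "1 + a x * D t \<noteq> 0" by (smt (verit) mult_nonneg_nonneg)
    qed
    show "continuous_on {0..} (\<lambda>r. 2 * a r / (1 + a r * D t))"
      by (intro continuous_on_divide continuous_on_mult continuous_on_add continuous_on_const ac nz)
    show sm: "strict_mono_on {0..} (\<lambda>r. 2 * a r / (1 + a r * D t))"
    proof (rule strict_mono_onI)
      fix r s :: real assume "r \<in> {0..}" "s \<in> {0..}" "r < s"
      then have "0 \<le> a r" "a r < a s" using an asm by auto
      then show "2 * a r / (1 + a r * D t) < 2 * a s / (1 + a s * D t)"
        using fmono Dn t by blast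
    qed
    then show "mono_on {0..} (\<lambda>r. 2 * a r / (1 + a r * D t))"
      by (rule strict_mono_on_imp_mono_on)
    show "2 * a 0 / (1 + a 0 * D t) = 0" by (simp add: a0)
  next
    fix t s :: real assume "0 \<le> t" "0 \<le> s"
    then have "a s \<ge> 0" "D t \<ge> 0" using an Dn by auto
    then show "0 \<le> 2 * a s / (1 + a s * D t)" by simp
  next
    fix s :: real assume s: "0 \<le> s"
    show "antimono_on {0..} (\<lambda>\<tau>. 2 * a s / (1 + a s * D \<tau>))"
    proof (rule monotone_onI)
      fix r1 r2 :: real assume r: "r1 \<in> {0..}" "r2 \<in> {0..}" "r1 \<le> r2"
      have "D r1 \<le> D r2" using mono_onD[OF Dm r] .
      moreover have "D r1 \<ge> 0" using Dn r by auto
      ultimately have "a s * D r1 \<le> a s * D r2" "a s * D r1 \<ge> 0" using an[OF s]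
        by (auto intro: mult_left_mono)
      then show "2 * a s / (1 + a s * D r2) \<le> 2 * a s / (1 + a s * D r1)"
        using an[OF s] by (intro divide_left_mono) auto
    qed
    show "((\<lambda>\<tau>. 2 * a s / (1 + a s * D \<tau>)) \<longlongrightarrow> 0) at_top"
    proof (cases "a s = 0")
      case True then show ?thesis by simp
    next
      case False
      then have ap: "a s > 0" using an[OF s] by simp
      have "filterlim (\<lambda>\<tau>. a s * D \<tau>) at_top at_top"
        using filterlim_tendsto_pos_mult_at_top[OF tendsto_const ap Dl] .
      then have "filterlim (\<lambda>\<tau>. 1 + a s * D \<tau>) at_top at_top"
        by (rule filterlim_tendsto_add_at_top[OF tendsto_const])
      then have "filterlim (\<lambda>\<tau>. 1 + a s * D \<tau>) at_infinity at_top"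
        using filterlim_mono[OF _ at_top_le_at_infinity order_refl] by blast
      then show ?thesis by (rule tendsto_divide_0[OF tendsto_const])
    qed
  qed
  then show ?thesis by (simp add: a_def)
qed

lemma KL_add:
  fixes g :: "real \<Rightarrow> real \<Rightarrow> real"
  assumes gc: "continuous_on ({0..} \<times> {0..}) (\<lambda>(s,t). g s t)"
    and gm: "\<forall>t\<ge>0. mono_on {0..} (\<lambda>s. g s t)"
    and ga: "\<forall>s\<ge>0. antimono_on {0..} (g s)"
    and gl: "\<forall>s\<ge>0. (g s \<longlongrightarrow> 0) at_top"
    and g0: "\<forall>t\<ge>0. g 0 t = 0"
    and gn: "\<forall>s\<ge>0. \<forall>t\<ge>0. g s t \<ge> 0"
  shows "classKL (\<lambda>s t. g s t + s * exp (- t))"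
  unfolding classKL_def classK_def classN_def
proof (intro conjI allI impI)
  show "continuous_on ({0..} \<times> {0..}) (\<lambda>(s, t). g s t + s * exp (- t))"
  proof -
    have g1: "continuous_on ({0..} \<times> {0..}) (\<lambda>x. g (fst x) (snd x))" using gc by (simp add: case_prod_beta')
    have g2: "continuous_on ({0..} \<times> {0..}) (\<lambda>x::real\<times>real. fst x * exp (- snd x))"
      by (intro continuous_intros)
    have "continuous_on ({0..} \<times> {0..}) (\<lambda>x. g (fst x) (snd x) + fst x * exp (- snd x))"
      by (rule continuous_on_add[OF g1 g2])
    then show ?thesis by (simp add: case_prod_beta')
  qed
next
  fix t :: real assume t: "0 \<le> t"
  have c0: "continuous_on ({0..} \<times> {t}) (\<lambda>(s,t). g s t)" by (rule continuous_on_subset[OF gc]) (use t in auto)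
  have img: "(\<lambda>s. (s,t)) ` {0..} = {0..} \<times> {t}" by auto
  have c1: "continuous_on ((\<lambda>s. (s,t)) ` {0..}) (\<lambda>(s,t). g s t)" using c0 by (simp only: img)
  have "continuous_on {0..} ((\<lambda>(s,t). g s t) \<circ> (\<lambda>s. (s, t)))"
    by (rule continuous_on_compose[OF continuous_on_Pair[OF continuous_on_id continuous_on_const] c1])
  then have "continuous_on {0..} (\<lambda>s. g s t)" by (simp add: o_def)
  then show "continuous_on {0..} (\<lambda>s. g s t + s * exp (- t))"
    by (intro continuous_intros)
  show sm: "strict_mono_on {0..} (\<lambda>s. g s t + s * exp (- t))"
  proof (rule strict_mono_onI)
    fix r s :: real assume "r \<in> {0..}" "s \<in> {0..}" "r < s"
    then have "g r t \<le> g s t" by (intro mono_onD[OF gm[rule_format, OF t]]) auto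
    moreover have "r * exp (-t) < s * exp (-t)" using \<open>r < s\<close> by simp
    ultimately show "g r t + r * exp (- t) < g s t + s * exp (- t)" by linarith
  qed
  then show "mono_on {0..} (\<lambda>s. g s t + s * exp (- t))" by (rule strict_mono_on_imp_mono_on)
  show "g 0 t + 0 * exp (- t) = 0" using g0 t by simp
next
  fix t s :: real assume "0 \<le> t" "0 \<le> s"
  then show "0 \<le> g s t + s * exp (- t)" using gn by simp
next
  fix s :: real assume s: "0 \<le> s"
  show "antimono_on {0..} (\<lambda>t. g s t + s * exp (- t))"
  proof (rule monotone_onI)
    fix r1 r2 :: real assume "r1 \<in> {0..}" "r2 \<in> {0..}" "r1 \<le> r2"
    then have "g s r2 \<le> g s r1" using monotone_onD[OF ga[rule_format, OF s]] by blast
    moreover have "s * exp (- r2) \<le> s * exp (- r1)" using s \<open>r1 \<le> r2\<close> by (intro mult_left_mono) auto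
    ultimately show "g s r2 + s * exp (- r2) \<le> g s r1 + s * exp (- r1)" by linarith
  qed
  have "((\<lambda>t. s * exp (- t)) \<longlongrightarrow> s * 0) at_top"
    by (intro tendsto_intros exp_at_bot[THEN filterlim_compose] filterlim_uminus_at_bot_at_top)
  then show "((\<lambda>t. g s t + s * exp (- t)) \<longlongrightarrow> 0) at_top"
    using tendsto_add[OF gl[rule_format, OF s]] by fastforce
qed
lemma classN_add:
  assumes A: "classN f" and B: "classN g"
  shows "classN (\<lambda>x. f x + g x)"
proof -
  have fc: "continuous_on {0..} f" and fm: "mono_on {0..} f" and f0: "f 0 = 0" and fn: "\<forall>s\<ge>0. 0 \<le> f s"
    using A unfolding classN_def by auto
  have gc: "continuous_on {0..} g" and gm: "mono_on {0..} g" and g0: "g 0 = 0" and gn: "\<forall>s\<ge>0. 0 \<le> g s"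
    using B unfolding classN_def by auto
  have c: "continuous_on {0..} (\<lambda>x. f x + g x)" by (rule continuous_on_add[OF fc gc])
  have m: "mono_on {0..} (\<lambda>x. f x + g x)"
  proof (rule mono_onI)
    fix r s :: real assume rs: "r \<in> {0..}" "s \<in> {0..}" "r \<le> s"
    have "f r \<le> f s" by (rule mono_onD[OF fm rs])
    moreover have "g r \<le> g s" by (rule mono_onD[OF gm rs])
    ultimately show "f r + g r \<le> f s + g s" by simp
  qed
  show ?thesis unfolding classN_def using c m f0 g0 fn gn by simp
qed

lemma key_forward:
  fixes \<beta> :: "real \<Rightarrow> real \<Rightarrow> real" and \<gamma> \<sigma> :: "real \<Rightarrow> real"
  assumes KL: "classKL \<beta>" and gN: "classN \<gamma>" and sN: "classN \<sigma>"
  shows "\<exists>\<beta>' \<rho> \<gamma>'. classKL \<beta>' \<and> classN \<rho> \<and> classN \<gamma>' \<and>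
    (\<forall>r s t v y. 0 \<le> r \<longrightarrow> 0 \<le> s \<longrightarrow> 0 \<le> t \<longrightarrow> 0 \<le> v \<longrightarrow> y \<le> \<beta> s t + \<gamma> v \<longrightarrow>
        y \<le> max (\<sigma> r) (\<sigma> v) \<longrightarrow> y \<le> \<beta>' r (t / (1 + \<rho> s)) + \<gamma>' v)"
proof -
  have lim: "\<And>s. s \<ge> 0 \<Longrightarrow> (\<beta> s \<longlongrightarrow> 0) at_top" using KL_lim[OF KL] by blast
  have bmono: "\<And>t s1 s2. t \<ge> 0 \<Longrightarrow> 0 \<le> s1 \<Longrightarrow> s1 \<le> s2 \<Longrightarrow> \<beta> s1 t \<le> \<beta> s2 t"
    by (rule KL_mono[OF KL])
  have "\<forall>k::nat. \<exists>T. \<forall>t\<ge>T. \<beta> (real k + 1) t \<le> 1 / (real k + 1)"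
  proof
    fix k :: nat
    have "eventually (\<lambda>t. \<beta> (real k + 1) t < 1 / (real k + 1)) at_top"
      by (rule order_tendstoD(2)[OF lim]) auto
    then show "\<exists>T. \<forall>t\<ge>T. \<beta> (real k + 1) t \<le> 1 / (real k + 1)"
      unfolding eventually_at_top_linorder by (auto intro: less_imp_le)
  qed
  then have "\<exists>T. \<forall>k. \<forall>t\<ge>T k. \<beta> (real k + 1) t \<le> 1 / (real k + 1)" by (rule choice)
  then obtain T where T0: "\<forall>k. \<forall>t\<ge>T k. \<beta> (real k + 1) t \<le> 1 / (real k + 1)" by blast
  have T: "\<beta> (real k + 1) t \<le> 1 / (real k + 1)" if "t \<ge> T k" for k t using T0 that by blast
  define S where "S k = (\<Sum>i\<le>k. \<bar>T i\<bar> + 1)" for k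
  have S_T: "T k \<le> S k" for k
  proof -
    have "\<bar>T k\<bar> + 1 \<le> S k" unfolding S_def by (rule member_le_sum) auto
    then show ?thesis by linarith
  qed
  have S_k: "real k + 1 \<le> S k" for k
  proof -
    have "(\<Sum>i\<le>k. (1::real)) \<le> S k" unfolding S_def by (rule sum_mono) auto
    then show ?thesis by simp
  qed
  have S_mono: "S i \<le> S j" if "i \<le> j" for i j
    unfolding S_def by (rule sum_mono2) (use that in auto)
  have S1: "S k \<ge> 1" for k using S_k[of k] by simp
  define m where "m s = S (nat \<lceil>s\<rceil>)" for s :: real
  have m_mono: "mono m" unfolding m_def
  proof (rule monoI)
    fix x y :: real assume "x \<le> y"
    then have "nat \<lceil>x\<rceil> \<le> nat \<lceil>y\<rceil>" by (intro nat_mono ceiling_mono)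
    then show "S (nat \<lceil>x\<rceil>) \<le> S (nat \<lceil>y\<rceil>)" by (rule S_mono)
  qed
  have m1: "m s \<ge> 1" for s unfolding m_def by (rule S1)
  have claimP: "\<beta> s t \<le> 1 / (real j + 1)" if s: "0 \<le> s" and tj: "S j \<le> t" and tm: "m s \<le> t" for s t j
  proof -
    have t0: "t \<ge> 0" using tj S1[of j] by linarith
    show ?thesis
    proof (cases "s \<le> real j + 1")
      case True
      have "\<beta> s t \<le> \<beta> (real j + 1) t" by (rule bmono) (use t0 s True in auto)
      also have "\<dots> \<le> 1 / (real j + 1)" by (rule T) (use tj S_T[of j] in linarith)
      finally show ?thesis .
    next
      case False
      define k where "k = nat \<lceil>s\<rceil>"
      have ks: "s \<le> real k" unfolding k_def by linarith
      have jk: "j \<le> k" using False ks by linarith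
      have "\<beta> s t \<le> \<beta> (real k + 1) t" by (rule bmono) (use t0 s ks in auto)
      also have "\<dots> \<le> 1 / (real k + 1)" by (rule T) (use tm S_T[of k] in \<open>simp add: m_def k_def\<close>)
      also have "\<dots> \<le> 1 / (real j + 1)" using jk by (simp add: divide_simps)
      finally show ?thesis .
    qed
  qed
  obtain \<rho> C where rN: "classN \<rho>" and C1: "C \<ge> 1" and mC: "\<And>s. s \<ge> 0 \<Longrightarrow> m s \<le> C * (1 + \<rho> s)"
  proof -
    have "\<And>x. m x \<ge> 0" using m1 by (smt (verit))
    from majorant[OF m_mono this] show ?thesis using that by blast
  qed
  have r0: "\<rho> s \<ge> 0" if "s \<ge> 0" for s using N_nonneg[OF rN that] .
  define J where "J \<tau> = {j. C * S j \<le> \<tau>}" for \<tau>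
  have J_fin: "finite (J \<tau>)" for \<tau>
  proof (rule finite_subset[of _ "{..nat \<lceil>\<tau>\<rceil>}"])
    show "J \<tau> \<subseteq> {..nat \<lceil>\<tau>\<rceil>}"
    proof
      fix j assume "j \<in> J \<tau>"
      then have "C * S j \<le> \<tau>" unfolding J_def by simp
      moreover have "S j \<le> C * S j" using C1 S1[of j] by simp
      ultimately have "real j \<le> \<tau>" using S_k[of j] by linarith
      then show "j \<in> {..nat \<lceil>\<tau>\<rceil>}" by (simp add: le_nat_iff) linarith
    qed
  qed simp
  define n where "n \<tau> = real (card (J \<tau>))" for \<tau>
  have n_mono: "mono n" unfolding n_def
  proof (rule monoI)
    fix x y :: real assume "x \<le> y"
    then have "J x \<subseteq> J y" unfolding J_def by auto
    then show "real (card (J x)) \<le> real (card (J y))" using J_fin by (simp add: card_mono)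
  qed
  have n_nn: "n \<tau> \<ge> 0" for \<tau> unfolding n_def by simp
  have n_lim: "filterlim n at_top at_top"
    unfolding filterlim_at_top
  proof
    fix Z :: real
    show "eventually (\<lambda>\<tau>. n \<tau> \<ge> Z) at_top"
      unfolding eventually_at_top_linorder
    proof (intro exI allI impI)
      fix \<tau> assume \<tau>: "\<tau> \<ge> C * S (nat \<lceil>Z\<rceil>)"
      have "{..nat \<lceil>Z\<rceil>} \<subseteq> J \<tau>"
      proof
        fix j assume "j \<in> {..nat \<lceil>Z\<rceil>}"
        then have "S j \<le> S (nat \<lceil>Z\<rceil>)" using S_mono by simp
        then have "C * S j \<le> C * S (nat \<lceil>Z\<rceil>)" using C1 by simp
        then show "j \<in> J \<tau>" unfolding J_def using \<tau> by simp
      qed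
      then have "card {..nat \<lceil>Z\<rceil>} \<le> card (J \<tau>)" using J_fin by (rule card_mono[rotated])
      then have "real (nat \<lceil>Z\<rceil> + 1) \<le> n \<tau>" unfolding n_def by simp
      then show "Z \<le> n \<tau>" by linarith
    qed
  qed
  have n_key: "\<beta> s (\<tau> * (1 + \<rho> s)) * n \<tau> \<le> 1" if s: "s \<ge> 0" and \<tau>: "\<tau> \<ge> 0" for s \<tau>
  proof (cases "card (J \<tau>) = 0")
    case True then show ?thesis unfolding n_def by simp
  next
    case False
    define j where "j = card (J \<tau>) - 1"
    have cj: "card (J \<tau>) = j + 1" using False unfolding j_def by simp
    have Sj: "C * S j \<le> \<tau>"
    proof (rule ccontr)
      assume "\<not> C * S j \<le> \<tau>"
      then have "J \<tau> \<subseteq> {..<j}"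
      proof (intro subsetI)
        fix i assume i: "i \<in> J \<tau>" and c: "\<not> C * S j \<le> \<tau>"
        show "i \<in> {..<j}"
        proof (rule ccontr)
          assume "i \<notin> {..<j}"
          then have "S j \<le> S i" using S_mono by simp
          then have "C * S j \<le> C * S i" using C1 by simp
          then show False using i c unfolding J_def by simp
        qed
      qed
      then have "card (J \<tau>) \<le> j" using card_mono[of "{..<j}"] by fastforce
      then show False using cj by simp
    qed
    have t1: "S j \<le> \<tau> * (1 + \<rho> s)" and t2: "m s \<le> \<tau> * (1 + \<rho> s)"
    proof -
      have "C * S j * (1 + \<rho> s) \<le> \<tau> * (1 + \<rho> s)"
        using Sj r0[OF s] by (intro mult_right_mono) auto
      moreover have "S j * m s \<le> S j * (C * (1 + \<rho> s))"
        using mC[OF s] S1[of j] by (intro mult_left_mono) auto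
      ultimately have *: "S j * m s \<le> \<tau> * (1 + \<rho> s)" by (simp add: algebra_simps)
      have "S j * 1 \<le> S j * m s" using m1[of s] S1[of j] by (intro mult_left_mono) auto
      then show "S j \<le> \<tau> * (1 + \<rho> s)" using * by simp
      have "1 * m s \<le> S j * m s" using m1[of s] S1[of j] by (intro mult_right_mono) auto
      then show "m s \<le> \<tau> * (1 + \<rho> s)" using * by simp
    qed
    have "\<beta> s (\<tau> * (1 + \<rho> s)) \<le> 1 / (real j + 1)" by (rule claimP[OF s t1 t2])
    then have "\<beta> s (\<tau> * (1 + \<rho> s)) * (real j + 1) \<le> 1" by (simp add: divide_simps)
    then show ?thesis unfolding n_def cj by (simp add: add.commute)
  qed
  obtain D where Dc: "continuous_on {0..} D" and Dm: "mono_on {0..} D"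
    and Dn: "\<forall>\<tau>\<ge>0. 0 \<le> D \<tau> \<and> D \<tau> \<le> n \<tau>" and Dl: "filterlim D at_top at_top"
    using minorant[OF n_mono n_nn n_lim] by blast
  have D_key: "D \<tau> * \<beta> s (\<tau> * (1 + \<rho> s)) \<le> 1" if s: "s \<ge> 0" and \<tau>: "\<tau> \<ge> 0" for s \<tau>
  proof (cases "\<beta> s (\<tau> * (1 + \<rho> s)) \<le> 0")
    case True
    then show ?thesis using Dn \<tau> by (smt (verit) mult_nonneg_nonpos)
  next
    case False
    then have "D \<tau> * \<beta> s (\<tau> * (1 + \<rho> s)) \<le> n \<tau> * \<beta> s (\<tau> * (1 + \<rho> s))"
      using Dn \<tau> by (intro mult_right_mono) auto
    then show ?thesis using n_key[OF s \<tau>] by (simp add: mult.commute)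
  qed
  define \<beta>' where "\<beta>' = (\<lambda>r \<tau>. 2 * (\<sigma> r + r) / (1 + (\<sigma> r + r) * D \<tau>))"
  have KL': "classKL \<beta>'" unfolding \<beta>'_def
    by (rule KL_harm[OF sN Dc Dm]) (use Dn Dl in auto)
  have gN': "classN (\<lambda>v. \<gamma> v + \<sigma> v)" by (rule classN_add[OF gN sN])
  have sn: "\<sigma> x \<ge> 0" if "x \<ge> 0" for x using N_nonneg[OF sN that] .
  have gn: "\<gamma> x \<ge> 0" if "x \<ge> 0" for x using N_nonneg[OF gN that] .
  have main: "y \<le> \<beta>' r (t / (1 + \<rho> s)) + (\<gamma> v + \<sigma> v)"
    if r: "0 \<le> r" and s: "0 \<le> s" and t: "0 \<le> t" and v: "0 \<le> v" and y1: "y \<le> \<beta> s t + \<gamma> v"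
      and y2: "y \<le> max (\<sigma> r) (\<sigma> v)" for r s t v y
  proof -
    define \<tau> where "\<tau> = t / (1 + \<rho> s)"
    have rp: "1 + \<rho> s > 0" using r0[OF s] by simp
    have tt: "t = \<tau> * (1 + \<rho> s)" unfolding \<tau>_def using rp by simp
    have \<tau>0: "\<tau> \<ge> 0" unfolding \<tau>_def using t rp by simp
    define b where "b = \<beta> s t"
    define a where "a = \<sigma> r + r"
    have a0: "a \<ge> 0" "\<sigma> r \<le> a" unfolding a_def using sn[OF r] r by auto
    have db: "D \<tau> * b \<le> 1" unfolding b_def tt using D_key[OF s \<tau>0] .
    have hm: "min b a \<le> 2 * a / (1 + a * D \<tau>)"
      by (rule min_le_harm[OF a0(1) _ db]) (use Dn \<tau>0 in auto)
    have "y \<le> min b a + \<gamma> v + \<sigma> v"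
    proof (cases "b \<le> \<sigma> r")
      case True
      then have "min b a = b" using a0 by simp
      then show ?thesis using y1 sn[OF v] unfolding b_def by simp
    next
      case False
      then have "min b a \<ge> \<sigma> r" using a0 by simp
      moreover have "y \<le> \<sigma> r + \<sigma> v" using y2 sn[OF r] sn[OF v] by linarith
      ultimately show ?thesis using gn[OF v] by linarith
    qed
    then show ?thesis using hm unfolding \<beta>'_def \<tau>_def a_def by simp
  qed
  show ?thesis
    by (rule exI[of _ \<beta>'], rule exI[of _ \<rho>], rule exI[of _ "\<lambda>v. \<gamma> v + \<sigma> v"])
       (use KL' rN gN' main in blast)
qed


lemma xnorm_nonneg:
  assumes "\<theta> > 0" "\<xi> \<in> Xspace \<theta>"
  shows "xnorm \<theta> \<xi> \<ge> 0"
proof -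
  have c: "continuous_on {-\<theta>..0} \<xi>" using assms(2) unfolding Xspace_def by simp
  have "continuous_on {-\<theta>..0} (\<lambda>s. norm (\<xi> s))" by (intro continuous_on_norm c)
  then have "compact ((\<lambda>s. norm (\<xi> s)) ` {-\<theta>..0})" by (rule compact_continuous_image) simp
  then have "bdd_above ((\<lambda>s. norm (\<xi> s)) ` {-\<theta>..0})" by (intro bounded_imp_bdd_above compact_imp_bounded)
  moreover have "0 \<in> {-\<theta>..0}" using assms(1) by simp
  ultimately have "norm (\<xi> 0) \<le> (SUP s\<in>{-\<theta>..0}. norm (\<xi> s))" by (intro cSUP_upper)
  then show ?thesis unfolding xnorm_def using norm_ge_zero[of "\<xi> 0"] by linarith
qed

lemma unorm_nonneg:
  assumes "ess_bounded u"
  shows "unorm u \<ge> 0"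
proof -
  obtain B where B: "AE t in lebesgue. 0 \<le> t \<longrightarrow> norm (u t) \<le> B" using assms unfolding ess_bounded_def by blast
  have "AE t in lebesgue. 0 \<le> t \<longrightarrow> norm (u t) \<le> max B 0"
    using B by (rule eventually_mono) auto
  then have ne: "max B 0 \<in> {B. B \<ge> 0 \<and> (AE t in lebesgue. 0 \<le> t \<longrightarrow> norm (u t) \<le> B)}" by simp
  have nemp: "{B. B \<ge> 0 \<and> (AE t in lebesgue. 0 \<le> t \<longrightarrow> norm (u t) \<le> B)} \<noteq> {}" using ne by blast
  show ?thesis unfolding unorm_def
    by (rule cInf_greatest[OF nemp]) auto
qed

lemma key_backward_IOS:
  fixes \<beta> :: "real \<Rightarrow> real \<Rightarrow> real" and \<rho> \<pi> :: "real \<Rightarrow> real"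
  assumes KL: "classKL \<beta>" and rN: "classN \<rho>" and pN: "classN \<pi>"
  shows "\<exists>\<beta>'. classKL \<beta>' \<and> (\<forall>r s t. 0 \<le> r \<longrightarrow> r \<le> \<pi> s \<longrightarrow> 0 \<le> s \<longrightarrow> 0 \<le> t \<longrightarrow>
            \<beta> r (t / (1 + \<rho> s)) \<le> \<beta>' s t)"
proof -
  define g where "g s t = \<beta> (\<pi> s) (t / (1 + \<rho> s))" for s t
  have rpos: "1 + \<rho> s > 0" if "s \<ge> 0" for s using N_nonneg[OF rN that] by simp
  have pn: "\<pi> s \<ge> 0" if "s \<ge> 0" for s using N_nonneg[OF pN that] .
  have gc: "continuous_on ({0..} \<times> {0..}) (\<lambda>(s,t). g s t)"
  proof -
    have c1: "continuous_on ({0..} \<times> {0..}) (\<lambda>x::real\<times>real. \<pi> (fst x))"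
      by (rule continuous_on_compose2[OF N_cont[OF pN] continuous_on_fst[OF continuous_on_id]]) auto
    have c2: "continuous_on ({0..} \<times> {0..}) (\<lambda>x::real\<times>real. \<rho> (fst x))"
      by (rule continuous_on_compose2[OF N_cont[OF rN] continuous_on_fst[OF continuous_on_id]]) auto
    have nz: "\<forall>x\<in>({0..} \<times> {0..} :: (real \<times> real) set). 1 + \<rho> (fst x) \<noteq> 0"
    proof
      fix x :: "real \<times> real" assume "x \<in> {0..} \<times> {0..}"
      then have "fst x \<ge> 0" by (auto simp: mem_Times_iff)
      then show "1 + \<rho> (fst x) \<noteq> 0" using rpos by (metis less_irrefl)
    qed
    have c3: "continuous_on ({0..} \<times> {0..}) (\<lambda>x::real\<times>real. snd x / (1 + \<rho> (fst x)))"
    proof -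
      have c3': "continuous_on ({0..} \<times> {0..}) (\<lambda>x::real\<times>real. 1 + \<rho> (fst x))"
        using continuous_on_add[OF continuous_on_const c2] by simp
      have c3'': "continuous_on ({0..} \<times> {0..}) (\<lambda>x::real\<times>real. snd x)"
        by (rule continuous_on_snd[OF continuous_on_id])
      show ?thesis using continuous_on_divide[OF c3'' c3' nz] by simp
    qed
    have c4: "continuous_on ({0..} \<times> {0..}) (\<lambda>x::real\<times>real. (\<pi> (fst x), snd x / (1 + \<rho> (fst x))))"
      by (rule continuous_on_Pair[OF c1 c3])
    have sub: "(\<lambda>x::real\<times>real. (\<pi> (fst x), snd x / (1 + \<rho> (fst x)))) ` ({0..} \<times> {0..}) \<subseteq> {0..} \<times> {0..}"
    proof
      fix y assume "y \<in> (\<lambda>x::real\<times>real. (\<pi> (fst x), snd x / (1 + \<rho> (fst x)))) ` ({0..} \<times> {0..})"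
      then obtain a b where ab: "a \<ge> 0" "b \<ge> 0" "y = (\<pi> a, b / (1 + \<rho> a))" by auto
      then show "y \<in> {0..} \<times> {0..}" using pn[OF ab(1)] rpos[OF ab(1)] by simp
    qed
    have "continuous_on ({0..} \<times> {0..}) ((\<lambda>(s,t). \<beta> s t) \<circ> (\<lambda>x::real\<times>real. (\<pi> (fst x), snd x / (1 + \<rho> (fst x)))))"
      by (rule continuous_on_compose[OF c4 continuous_on_subset[OF KL_cont[OF KL] sub]])
    then show ?thesis by (simp add: g_def o_def case_prod_beta')
  qed
  have gm: "\<forall>t\<ge>0. mono_on {0..} (\<lambda>s. g s t)"
  proof (intro allI impI mono_onI)
    fix t s1 s2 :: real assume t: "t \<ge> 0" and s: "s1 \<in> {0..}" "s2 \<in> {0..}" "s1 \<le> s2"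
    have r12: "\<rho> s1 \<le> \<rho> s2" using N_mono[OF rN] s by auto
    have "t / (1 + \<rho> s2) \<le> t / (1 + \<rho> s1)"
      using t r12 rpos s by (intro divide_left_mono) auto
    moreover have "t / (1 + \<rho> s2) \<ge> 0" using t rpos[of s2] s by simp
    ultimately have "\<beta> (\<pi> s1) (t / (1 + \<rho> s1)) \<le> \<beta> (\<pi> s1) (t / (1 + \<rho> s2))"
      using KL_anti[OF KL pn] s by auto
    also have "\<dots> \<le> \<beta> (\<pi> s2) (t / (1 + \<rho> s2))"
      using KL_mono[OF KL _ pn N_mono[OF pN]] s \<open>t / (1 + \<rho> s2) \<ge> 0\<close> by auto
    finally show "g s1 t \<le> g s2 t" unfolding g_def .
  qed
  have ga: "\<forall>s\<ge>0. antimono_on {0..} (g s)"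
  proof (intro allI impI monotone_onI)
    fix s t1 t2 :: real assume s: "s \<ge> 0" and t: "t1 \<in> {0..}" "t2 \<in> {0..}" "t1 \<le> t2"
    have "t1 / (1 + \<rho> s) \<le> t2 / (1 + \<rho> s)" using t rpos[OF s] by (intro divide_right_mono) auto
    moreover have "t1 / (1 + \<rho> s) \<ge> 0" using t rpos[OF s] by auto
    ultimately show "g s t2 \<le> g s t1" unfolding g_def using KL_anti[OF KL pn[OF s]] by auto
  qed
  have gl: "\<forall>s\<ge>0. (g s \<longlongrightarrow> 0) at_top"
  proof (intro allI impI)
    fix s :: real assume s: "s \<ge> 0"
    have "filterlim (\<lambda>t. t / (1 + \<rho> s)) at_top at_top"
      unfolding filterlim_at_top
    proof
      fix Z :: real
      show "eventually (\<lambda>t. Z \<le> t / (1 + \<rho> s)) at_top"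
        unfolding eventually_at_top_linorder
        by (rule exI[of _ "Z * (1 + \<rho> s)"]) (use rpos[OF s] in \<open>auto simp: pos_le_divide_eq\<close>)
    qed
    then show "(g s \<longlongrightarrow> 0) at_top" unfolding g_def
      by (rule filterlim_compose[OF KL_lim[OF KL pn[OF s]]])
  qed
  have g0: "\<forall>t\<ge>0. g 0 t = 0"
  proof (intro allI impI)
    fix t :: real assume t: "t \<ge> 0"
    have "t / (1 + \<rho> 0) \<ge> 0" using t rpos[of 0] by simp
    then show "g 0 t = 0" unfolding g_def N_zero[OF pN] by (rule KL_zero[OF KL])
  qed
  have gn: "\<forall>s\<ge>0. \<forall>t\<ge>0. g s t \<ge> 0"
  proof (intro allI impI)
    fix s t :: real assume s: "s \<ge> 0" and t: "t \<ge> 0"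
    have "t / (1 + \<rho> s) \<ge> 0" using t rpos[OF s] by simp
    then show "g s t \<ge> 0" unfolding g_def by (rule KL_nonneg[OF KL pn[OF s]])
  qed
  have KL': "classKL (\<lambda>s t. g s t + s * exp (- t))" by (rule KL_add[OF gc gm ga gl g0 gn])
  have bound: "\<beta> r (t / (1 + \<rho> s)) \<le> g s t + s * exp (- t)"
    if "0 \<le> r" "r \<le> \<pi> s" "0 \<le> s" "0 \<le> t" for r s t
  proof -
    have "t / (1 + \<rho> s) \<ge> 0" using that rpos[of s] by simp
    then have "\<beta> r (t / (1 + \<rho> s)) \<le> g s t" unfolding g_def using KL_mono[OF KL _ that(1,2)] by blast
    moreover have "s * exp (- t) \<ge> 0" using that by simp
    ultimately show ?thesis by linarith
  qed
  show ?thesis using KL' bound by blast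
qed

lemma key_backward_OL:
  fixes \<beta> :: "real \<Rightarrow> real \<Rightarrow> real" and \<gamma> :: "real \<Rightarrow> real"
  assumes KL: "classKL \<beta>" and gN: "classN \<gamma>"
  shows "\<exists>\<sigma>. classN \<sigma> \<and> (\<forall>r v \<tau>. 0 \<le> r \<longrightarrow> 0 \<le> v \<longrightarrow> 0 \<le> \<tau> \<longrightarrow> \<beta> r \<tau> + \<gamma> v \<le> max (\<sigma> r) (\<sigma> v))"
proof -
  have b0: "classN (\<lambda>s. \<beta> s 0)" using KL unfolding classKL_def classK_def by simp
  have A: "classN (\<lambda>x. \<beta> x 0 + \<gamma> x)" by (rule classN_add[OF b0 gN])
  have S: "classN (\<lambda>x. (\<beta> x 0 + \<gamma> x) + (\<beta> x 0 + \<gamma> x))" by (rule classN_add[OF A A])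
  have ineq: "\<beta> r \<tau> + \<gamma> v \<le> max ((\<beta> r 0 + \<gamma> r) + (\<beta> r 0 + \<gamma> r)) ((\<beta> v 0 + \<gamma> v) + (\<beta> v 0 + \<gamma> v))"
    if "0 \<le> r" "0 \<le> v" "0 \<le> \<tau>" for r v \<tau>
  proof -
    have "\<beta> r \<tau> \<le> \<beta> r 0" using KL_anti[OF KL that(1)] that(3) by simp
    moreover have "\<beta> r 0 \<ge> 0" "\<beta> v 0 \<ge> 0" using KL_nonneg[OF KL] that by auto
    moreover have "\<gamma> r \<ge> 0" "\<gamma> v \<ge> 0" using N_nonneg[OF gN] that by auto
    ultimately show ?thesis by (simp add: max_def)
  qed
  show ?thesis using S ineq by blast
qed

theorem proposition3p2:
  fixes \<theta> :: real
    and f :: "(real \<Rightarrow> 'a::euclidean_space) \<Rightarrow> 'b::euclidean_space \<Rightarrow> 'a"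
    and h :: "(real \<Rightarrow> 'a) \<Rightarrow> 'c::euclidean_space"
    and \<pi> :: "real \<Rightarrow> real"
  assumes "\<theta> > 0"
    and "f_locally_lipschitz \<theta> f"
    and "f_bounded_on_bounded \<theta> f"
    and "h_continuous \<theta> h"
    and "classN \<pi>"
    and "\<forall>\<xi>\<in>Xspace \<theta>. norm (h \<xi>) \<le> \<pi> (xnorm \<theta> \<xi>)"
    and "forward_complete \<theta> f"
  shows "OL_IOS \<theta> f h \<longleftrightarrow>
    (\<exists>\<beta> \<rho> \<gamma>. classKL \<beta> \<and> classN \<rho> \<and> classN \<gamma> \<and>
      (\<forall>\<xi>\<in>Xspace \<theta>. \<forall>u\<in>Mspace. ess_bounded u \<longrightarrow> (\<forall>x. is_solution \<theta> f \<xi> u x \<longrightarrow>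
        (\<forall>t\<ge>0. norm (h (seg \<theta> x t))
            \<le> \<beta> (norm (h \<xi>)) (t / (1 + \<rho> (xnorm \<theta> \<xi>))) + \<gamma> (unorm u)))))"
proof -
  have xn: "\<And>\<xi>. \<xi> \<in> Xspace \<theta> \<Longrightarrow> xnorm \<theta> \<xi> \<ge> 0" using xnorm_nonneg[OF assms(1)] .
  show ?thesis
  proof
    assume OL: "OL_IOS \<theta> f h"
    obtain \<beta> \<gamma> where KL: "classKL \<beta>" and gN: "classN \<gamma>" and ios:
      "\<forall>\<xi>\<in>Xspace \<theta>. \<forall>u\<in>Mspace. ess_bounded u \<longrightarrow> (\<forall>x. is_solution \<theta> f \<xi> u x \<longrightarrow>
          (\<forall>t\<ge>0. norm (h (seg \<theta> x t)) \<le> \<beta> (xnorm \<theta> \<xi>) t + \<gamma> (unorm u)))"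
      using OL unfolding OL_IOS_def IOS_def by blast
    obtain \<sigma> where sN: "classN \<sigma>" and ol:
      "\<forall>\<xi>\<in>Xspace \<theta>. \<forall>u\<in>Mspace. ess_bounded u \<longrightarrow> (\<forall>x. is_solution \<theta> f \<xi> u x \<longrightarrow>
          (\<forall>t\<ge>0. norm (h (seg \<theta> x t)) \<le> max (\<sigma> (norm (h \<xi>))) (\<sigma> (unorm u))))"
      using OL unfolding OL_IOS_def by blast
    obtain \<beta>' \<rho> \<gamma>' where KL': "classKL \<beta>'" and rN: "classN \<rho>" and gN': "classN \<gamma>'" and
      main: "\<forall>r s t v y. 0 \<le> r \<longrightarrow> 0 \<le> s \<longrightarrow> 0 \<le> t \<longrightarrow> 0 \<le> v \<longrightarrow> y \<le> \<beta> s t + \<gamma> v \<longrightarrow>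
        y \<le> max (\<sigma> r) (\<sigma> v) \<longrightarrow> y \<le> \<beta>' r (t / (1 + \<rho> s)) + \<gamma>' v"
      using key_forward[OF KL gN sN] by blast
    have "\<forall>\<xi>\<in>Xspace \<theta>. \<forall>u\<in>Mspace. ess_bounded u \<longrightarrow> (\<forall>x. is_solution \<theta> f \<xi> u x \<longrightarrow>
        (\<forall>t\<ge>0. norm (h (seg \<theta> x t))
            \<le> \<beta>' (norm (h \<xi>)) (t / (1 + \<rho> (xnorm \<theta> \<xi>))) + \<gamma>' (unorm u)))"
    proof (intro ballI impI allI)
      fix \<xi> u x and t :: real
      assume \<xi>: "\<xi> \<in> Xspace \<theta>" and u: "u \<in> Mspace" and eb: "ess_bounded u"
        and sol: "is_solution \<theta> f \<xi> u x" and t: "0 \<le> t"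
      have y1: "norm (h (seg \<theta> x t)) \<le> \<beta> (xnorm \<theta> \<xi>) t + \<gamma> (unorm u)"
        using ios \<xi> u eb sol t by blast
      have y2: "norm (h (seg \<theta> x t)) \<le> max (\<sigma> (norm (h \<xi>))) (\<sigma> (unorm u))"
        using ol \<xi> u eb sol t by blast
      show "norm (h (seg \<theta> x t)) \<le> \<beta>' (norm (h \<xi>)) (t / (1 + \<rho> (xnorm \<theta> \<xi>))) + \<gamma>' (unorm u)"
        using main norm_ge_zero[of "h \<xi>"] xn[OF \<xi>] t unorm_nonneg[OF eb] y1 y2 by blast
    qed
    then show "\<exists>\<beta> \<rho> \<gamma>. classKL \<beta> \<and> classN \<rho> \<and> classN \<gamma> \<and>
      (\<forall>\<xi>\<in>Xspace \<theta>. \<forall>u\<in>Mspace. ess_bounded u \<longrightarrow> (\<forall>x. is_solution \<theta> f \<xi> u x \<longrightarrow>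
        (\<forall>t\<ge>0. norm (h (seg \<theta> x t))
            \<le> \<beta> (norm (h \<xi>)) (t / (1 + \<rho> (xnorm \<theta> \<xi>))) + \<gamma> (unorm u))))"
      using KL' rN gN' by blast
  next
    assume "\<exists>\<beta> \<rho> \<gamma>. classKL \<beta> \<and> classN \<rho> \<and> classN \<gamma> \<and>
      (\<forall>\<xi>\<in>Xspace \<theta>. \<forall>u\<in>Mspace. ess_bounded u \<longrightarrow> (\<forall>x. is_solution \<theta> f \<xi> u x \<longrightarrow>
        (\<forall>t\<ge>0. norm (h (seg \<theta> x t))
            \<le> \<beta> (norm (h \<xi>)) (t / (1 + \<rho> (xnorm \<theta> \<xi>))) + \<gamma> (unorm u))))"
    then obtain \<beta> \<rho> \<gamma> where KL: "classKL \<beta>" and rN: "classN \<rho>" and gN: "classN \<gamma>" and hyp: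
      "\<forall>\<xi>\<in>Xspace \<theta>. \<forall>u\<in>Mspace. ess_bounded u \<longrightarrow> (\<forall>x. is_solution \<theta> f \<xi> u x \<longrightarrow>
        (\<forall>t\<ge>0. norm (h (seg \<theta> x t))
            \<le> \<beta> (norm (h \<xi>)) (t / (1 + \<rho> (xnorm \<theta> \<xi>))) + \<gamma> (unorm u)))"
      by blast
    obtain \<beta>' where KL': "classKL \<beta>'" and bd: "\<forall>r s t. 0 \<le> r \<longrightarrow> r \<le> \<pi> s \<longrightarrow> 0 \<le> s \<longrightarrow> 0 \<le> t \<longrightarrow>
            \<beta> r (t / (1 + \<rho> s)) \<le> \<beta>' s t"
      using key_backward_IOS[OF KL rN assms(5)] by blast
    obtain \<sigma> where sN: "classN \<sigma>" and bo: "\<forall>r v \<tau>. 0 \<le> r \<longrightarrow> 0 \<le> v \<longrightarrow> 0 \<le> \<tau> \<longrightarrow> \<beta> r \<tau> + \<gamma> v \<le> max (\<sigma> r) (\<sigma> v)"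
      using key_backward_OL[OF KL gN] by blast
    have part1: "\<forall>\<xi>\<in>Xspace \<theta>. \<forall>u\<in>Mspace. ess_bounded u \<longrightarrow> (\<forall>x. is_solution \<theta> f \<xi> u x \<longrightarrow>
          (\<forall>t\<ge>0. norm (h (seg \<theta> x t)) \<le> \<beta>' (xnorm \<theta> \<xi>) t + \<gamma> (unorm u)))"
    proof (intro ballI impI allI)
      fix \<xi> u x and t :: real
      assume \<xi>: "\<xi> \<in> Xspace \<theta>" and u: "u \<in> Mspace" and eb: "ess_bounded u"
        and sol: "is_solution \<theta> f \<xi> u x" and t: "0 \<le> t"
      have y: "norm (h (seg \<theta> x t)) \<le> \<beta> (norm (h \<xi>)) (t / (1 + \<rho> (xnorm \<theta> \<xi>))) + \<gamma> (unorm u)"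
        using hyp \<xi> u eb sol t by blast
      have "norm (h \<xi>) \<le> \<pi> (xnorm \<theta> \<xi>)" using assms(6) \<xi> by blast
      then have "\<beta> (norm (h \<xi>)) (t / (1 + \<rho> (xnorm \<theta> \<xi>))) \<le> \<beta>' (xnorm \<theta> \<xi>) t"
        using bd norm_ge_zero[of "h \<xi>"] xn[OF \<xi>] t by blast
      then show "norm (h (seg \<theta> x t)) \<le> \<beta>' (xnorm \<theta> \<xi>) t + \<gamma> (unorm u)" using y by linarith
    qed
    have part2: "\<forall>\<xi>\<in>Xspace \<theta>. \<forall>u\<in>Mspace. ess_bounded u \<longrightarrow> (\<forall>x. is_solution \<theta> f \<xi> u x \<longrightarrow>
          (\<forall>t\<ge>0. norm (h (seg \<theta> x t)) \<le> max (\<sigma> (norm (h \<xi>))) (\<sigma> (unorm u))))"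
    proof (intro ballI impI allI)
      fix \<xi> u x and t :: real
      assume \<xi>: "\<xi> \<in> Xspace \<theta>" and u: "u \<in> Mspace" and eb: "ess_bounded u"
        and sol: "is_solution \<theta> f \<xi> u x" and t: "0 \<le> t"
      have y: "norm (h (seg \<theta> x t)) \<le> \<beta> (norm (h \<xi>)) (t / (1 + \<rho> (xnorm \<theta> \<xi>))) + \<gamma> (unorm u)"
        using hyp \<xi> u eb sol t by blast
      have "1 + \<rho> (xnorm \<theta> \<xi>) > 0" using N_nonneg[OF rN xn[OF \<xi>]] by simp
      then have "t / (1 + \<rho> (xnorm \<theta> \<xi>)) \<ge> 0" using t by simp
      then have "\<beta> (norm (h \<xi>)) (t / (1 + \<rho> (xnorm \<theta> \<xi>))) + \<gamma> (unorm u)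
          \<le> max (\<sigma> (norm (h \<xi>))) (\<sigma> (unorm u))"
        using bo norm_ge_zero[of "h \<xi>"] unorm_nonneg[OF eb] by blast
      then show "norm (h (seg \<theta> x t)) \<le> max (\<sigma> (norm (h \<xi>))) (\<sigma> (unorm u))" using y by linarith
    qed
    have "IOS \<theta> f h" unfolding IOS_def using assms(7) KL' gN part1 by blast
    then show "OL_IOS \<theta> f h" unfolding OL_IOS_def using sN part2 by blast
  qed
qed

end
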